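(* In the network model described in the context, let $\pi$ be an admissible cyclic policy with maximum inter-scheduling times $(k_e^{\pi})_{e\in E}$ and slice widths $(w_{i,e})$. If \begin{itemize} \item $\sum_{e\in\mathcal{T}^{(i)}}k_e^{\pi}\le\tau_i$ for all $f_i\in\mathcal{F}$, \item $\sum_{f_i:e\in\mathcal{T}^{(i)}}w_{i,e}\le c_e$ for all $e\in E$, \item $w_{i,e}=\lambda_i k_e^{\pi}$ for all $f_i\in\mathcal{F}$, $e\in\mathcal{T}^{(i)}$, \item $\mu^\pi(t)\in\mathcal{M}$ for all $0\le t<K^\pi$, \end{itemize} then $\pi$ supports $\mathcal{F}$. Furthermore, if in addition $\pi$ is a regular schedule, then all slices equal their bottleneck values, i.e. $w_{i,e}=\lambda_i/\bar{\mu}^\pi_e$ for all $f_i\in\mathcal{F}$, $e\in\mathcal{T}^{(i)}$.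
   Context: Network model: directed graph $G=(V,E)$, slotted time, link capacities $c_e$, interference given by a conflict graph on links with feasible activation sets $\mathcal{M}$ (its independent sets). Flows $f_i\in\mathcal{F}$ have fixed routes $\mathcal{T}^{(i)}$, deterministic fluid arrival rates $\lambda_i>0$ per slot at the source (arrivals during slots $0\le t\le T$), and deadlines $\tau_i$. Link $e\in\mathcal{T}^{(i)}$ reserves a slice $w_{i,e}$ for $f_i$ with its own FCFS queue (initially empty). An admissible policy activates $\mu^\pi(t)\in\mathcal{M}$ each slot and is work-conserving (an activated link serves $\min\{Q_{i,e}(t),w_{i,e}\}$ from each slice queue; served units proceed to the next link). A cyclic policy satisfies $\mu^\pi(t)=\mu^\pi(t+K^\pi)$ for all $t\ge0$; $\bar{\mu}^\pi_e=\frac1{K^\pi}\sum_{t=0}^{K^\pi-1}\mu^\pi_e(t)$. The maximum inter-scheduling time $k_e^\pi$ of link $e$ is the largest number of slots between two consecutive activations of $e$ (cyclically). $\pi$ is a regular schedule if $k^\pi_e=1/\bar{\mu}^\pi_e$ for all $e\in E$ (all inter-scheduling times of each link are equal). A policy supports $\mathcal{F}$ iff every packet of every flow $f_i$ is delivered to its destination within $\tau_i$ slots of its arrival, for any finite horizon $T$. *)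

theory Defs
  imports Complex_Main "HOL-Library.Extended_Nat"
begin

definition conflict_graph :: "('v \<times> 'v) set \<Rightarrow> (('v \<times> 'v) \<Rightarrow> ('v \<times> 'v) \<Rightarrow> bool) \<Rightarrow> bool" where
  "conflict_graph E cf \<longleftrightarrow> (\<forall>a b. cf a b \<longrightarrow> a \<in> E \<and> b \<in> E \<and> a \<noteq> b \<and> cf b a)"

text \<open>Feasible activation sets M: independent sets of the conflict graph.\<close>
definition indep_sets :: "('v \<times> 'v) set \<Rightarrow> (('v \<times> 'v) \<Rightarrow> ('v \<times> 'v) \<Rightarrow> bool) \<Rightarrow> ('v \<times> 'v) set set" where
  "indep_sets E cf = {S. S \<subseteq> E \<and> (\<forall>a\<in>S. \<forall>b\<in>S. \<not> cf a b)}"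

definition valid_route :: "('v \<times> 'v) set \<Rightarrow> ('v \<times> 'v) list \<Rightarrow> bool" where
  "valid_route E r \<longleftrightarrow> r \<noteq> [] \<and> set r \<subseteq> E \<and> distinct r \<and>
     (\<forall>j. Suc j < length r \<longrightarrow> snd (r ! j) = fst (r ! Suc j))"

definition cyclic_policy :: "(nat \<Rightarrow> 'e set) \<Rightarrow> nat \<Rightarrow> bool" where
  "cyclic_policy mu K \<longleftrightarrow> 0 < K \<and> (\<forall>t. mu (t + K) = mu t)"

definition next_act :: "(nat \<Rightarrow> 'e set) \<Rightarrow> 'e \<Rightarrow> nat \<Rightarrow> nat" where
  "next_act mu e t = (LEAST s. t < s \<and> e \<in> mu s)"

definition max_inter_sched :: "(nat \<Rightarrow> 'e set) \<Rightarrow> nat \<Rightarrow> 'e \<Rightarrow> enat" where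
  "max_inter_sched mu K e =
     (if \<exists>t<K. e \<in> mu t
      then enat (Max {next_act mu e t - t | t. t < K \<and> e \<in> mu t})
      else \<infinity>)"

definition mean_act :: "(nat \<Rightarrow> 'e set) \<Rightarrow> nat \<Rightarrow> 'e \<Rightarrow> real" where
  "mean_act mu K e = real (card {t. t < K \<and> e \<in> mu t}) / real K"

text \<open>Regular schedule: k_e = 1 / mu-bar_e for every link (infinity = 1/0 for unused links).\<close>
definition regular_schedule :: "'e set \<Rightarrow> (nat \<Rightarrow> 'e set) \<Rightarrow> nat \<Rightarrow> bool" where
  "regular_schedule E mu K \<longleftrightarrow>
     (\<forall>e\<in>E. case max_inter_sched mu K e of
                enat n \<Rightarrow> real n = 1 / mean_act mu K e
              | \<infinity> \<Rightarrow> mean_act mu K e = 0)"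

text \<open>Fluid dynamics. q i j is the backlog of flow i's slice queue at the j-th link of its
  route. Work-conserving service in slot t; served units and fresh arrivals of slot t join
  the respective queue at the end of slot t.\<close>
definition serve :: "('f \<Rightarrow> 'e list) \<Rightarrow> ('f \<Rightarrow> 'e \<Rightarrow> real) \<Rightarrow> (nat \<Rightarrow> 'e set)
    \<Rightarrow> ('f \<Rightarrow> nat \<Rightarrow> real) \<Rightarrow> nat \<Rightarrow> 'f \<Rightarrow> nat \<Rightarrow> real" where
  "serve route w mu q t i j =
     (if j < length (route i) \<and> route i ! j \<in> mu t then min (q i j) (w i (route i ! j)) else 0)"

definition inflow :: "('f \<Rightarrow> 'e list) \<Rightarrow> ('f \<Rightarrow> real) \<Rightarrow> nat \<Rightarrow> ('f \<Rightarrow> 'e \<Rightarrow> real)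
    \<Rightarrow> (nat \<Rightarrow> 'e set) \<Rightarrow> ('f \<Rightarrow> nat \<Rightarrow> real) \<Rightarrow> nat \<Rightarrow> 'f \<Rightarrow> nat \<Rightarrow> real" where
  "inflow route lam T w mu q t i j =
     (if j = 0 then (if t \<le> T then lam i else 0)
      else if j < length (route i) then serve route w mu q t i (j - 1) else 0)"

primrec queues :: "('f \<Rightarrow> 'e list) \<Rightarrow> ('f \<Rightarrow> real) \<Rightarrow> nat \<Rightarrow> ('f \<Rightarrow> 'e \<Rightarrow> real)
    \<Rightarrow> (nat \<Rightarrow> 'e set) \<Rightarrow> nat \<Rightarrow> 'f \<Rightarrow> nat \<Rightarrow> real" where
  "queues route lam T w mu 0 = (\<lambda>i j. 0)"
| "queues route lam T w mu (Suc t) =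
     (let q = queues route lam T w mu t in
      (\<lambda>i j. q i j - serve route w mu q t i j + inflow route lam T w mu q t i j))"

definition arrived :: "('f \<Rightarrow> real) \<Rightarrow> nat \<Rightarrow> 'f \<Rightarrow> nat \<Rightarrow> real" where
  "arrived lam T i t = (\<Sum>s\<le>t. if s \<le> T then lam i else 0)"

definition delivered :: "('f \<Rightarrow> 'e list) \<Rightarrow> ('f \<Rightarrow> real) \<Rightarrow> nat \<Rightarrow> ('f \<Rightarrow> 'e \<Rightarrow> real)
    \<Rightarrow> (nat \<Rightarrow> 'e set) \<Rightarrow> 'f \<Rightarrow> nat \<Rightarrow> real" where
  "delivered route lam T w mu i t =
     (\<Sum>s\<le>t. serve route w mu (queues route lam T w mu s) s i (length (route i) - 1))"

text \<open>The policy supports F: for every finite horizon T, all fluid of flow i arriving in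
  slot t is delivered by slot t + tau_i (FIFO fluid, so cumulative comparison).\<close>
definition supports :: "'f set \<Rightarrow> ('f \<Rightarrow> 'e list) \<Rightarrow> ('f \<Rightarrow> real) \<Rightarrow> ('f \<Rightarrow> nat)
    \<Rightarrow> ('f \<Rightarrow> 'e \<Rightarrow> real) \<Rightarrow> (nat \<Rightarrow> 'e set) \<Rightarrow> bool" where
  "supports F route lam tau w mu \<longleftrightarrow>
     (\<forall>T. \<forall>i\<in>F. \<forall>t. arrived lam T i t \<le> delivered route lam T w mu i (t + tau i))"

end

theory Submission
  imports Defs
begin

lemma per_shift:
  assumes "cyclic_policy mu K"
  shows "mu (t + q * K) = mu t"
proof (induction q)
  case 0 then show ?case by simp
next
  case (Suc q)
  have "mu (t + Suc q * K) = mu ((t + q * K) + K)" by (simp add: algebra_simps)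
  also have "\<dots> = mu (t + q * K)" using assms unfolding cyclic_policy_def by blast
  finally show ?case using Suc by simp
qed

lemma window:
  assumes cyc: "cyclic_policy mu K" and mis: "max_inter_sched mu K e = enat k"
  shows "\<exists>a. s \<le> a \<and> a < s + k \<and> e \<in> mu a"
proof -
  have K0: "0 < K" using cyc unfolding cyclic_policy_def by blast
  have ex0: "\<exists>t<K. e \<in> mu t"
    using mis unfolding max_inter_sched_def by (auto split: if_splits)
  hence kdef: "k = Max {next_act mu e t - t | t. t < K \<and> e \<in> mu t}"
    using mis unfolding max_inter_sched_def by auto
  have fin: "finite {next_act mu e t - t | t. t < K \<and> e \<in> mu t}"
    by (rule finite_subset[of _ "(\<lambda>t. next_act mu e t - t) ` {..<K}"]) auto
  have st3: "\<exists>a. t < a \<and> a \<le> t + k \<and> e \<in> mu a" if "t < K" "e \<in> mu t" for t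
  proof -
    have w: "t < t + K \<and> e \<in> mu (t + K)" using that cyc K0 unfolding cyclic_policy_def by auto
    let ?a = "next_act mu e t"
    have a: "t < ?a \<and> e \<in> mu ?a" unfolding next_act_def by (rule LeastI[of _ "t+K"]) (rule w)
    have "?a - t \<le> k" unfolding kdef by (rule Max_ge[OF fin]) (use that in auto)
    thus ?thesis using a by (intro exI[of _ ?a]) auto
  qed
  have st4: "\<exists>a. b < a \<and> a \<le> b + k \<and> e \<in> mu a" if eb: "e \<in> mu b" for b
  proof -
    have bd: "b = b mod K + (b div K) * K" by simp
    have "mu b = mu (b mod K)" using per_shift[OF cyc, of "b mod K" "b div K"] bd by simp
    then obtain a' where a': "b mod K < a'" "a' \<le> b mod K + k" "e \<in> mu a'"
      using st3[of "b mod K"] eb K0 by auto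
    have "mu (a' + (b div K) * K) = mu a'" by (rule per_shift[OF cyc])
    moreover have "b < a' + (b div K) * K" "a' + (b div K) * K \<le> b + k"
      using a'(1,2) bd by linarith+
    ultimately show ?thesis using a'(3) by (intro exI[of _ "a' + (b div K) * K"]) auto
  qed
  have st5: "\<exists>a. s \<le> a \<and> a < s + k \<and> e \<in> mu a" if "K \<le> s" for s
  proof -
    let ?S = "{b. b < s \<and> e \<in> mu b}"
    have finS: "finite ?S" by (rule finite_subset[of _ "{..<s}"]) auto
    have neS: "?S \<noteq> {}" using ex0 that by (auto intro: order.strict_trans2)
    let ?b = "Max ?S"
    have b: "?b \<in> ?S" using Max_in[OF finS neS] .
    obtain a where a: "?b < a" "a \<le> ?b + k" "e \<in> mu a" using st4[of ?b] b by auto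
    have "s \<le> a"
    proof (rule ccontr)
      assume "\<not> s \<le> a"
      hence "a \<in> ?S" using a by auto
      hence "a \<le> ?b" using Max_ge[OF finS] by blast
      thus False using a by simp
    qed
    thus ?thesis using a b by (intro exI[of _ a]) auto
  qed
  obtain a where a: "s + K \<le> a" "a < s + K + k" "e \<in> mu a" using st5[of "s + K"] by auto
  have "mu (a - K + 1 * K) = mu (a - K)" by (rule per_shift[OF cyc])
  hence "mu (a - K) = mu a" using a by simp
  thus ?thesis using a by (intro exI[of _ "a - K"]) auto
qed

lemma Lgen:
  fixes Il Dl B :: "nat \<Rightarrow> real" and act :: "nat \<Rightarrow> bool"
  assumes D0: "Dl 0 = 0"
    and DS: "\<And>t. Dl (Suc t) = Dl t + (if act t then min (Il t - Dl t) wv else 0)"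
    and wv: "0 \<le> wv"
    and Im: "mono Il" and I0: "0 \<le> Il 0"
    and win: "\<And>s. \<exists>a. s \<le> a \<and> a < s + k \<and> act a"
    and IB: "\<And>t. B (t - P) \<le> Il t"
    and Bk: "\<And>x. B x \<le> B (x - k) + wv"
    and B0: "B 0 \<le> 0" and Bm: "mono B"
  shows "mono Dl \<and> (\<forall>t. B (t - (P + k)) \<le> Dl t)"
proof -
  have le: "Dl t \<le> Il t" for t
  proof (induction t)
    case 0 then show ?case using D0 I0 by simp
  next
    case (Suc t)
    have "Il t \<le> Il (Suc t)" using Im by (simp add: monoD)
    thus ?case using Suc DS[of t] by auto
  qed
  have mD: "mono Dl" unfolding mono_iff_le_Suc using DS le wv by simp
  have nn: "0 \<le> Dl t" for t using monoD[OF mD, of 0 t] D0 by simp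
  have main: "B (t - (P + k)) \<le> Dl t" for t
  proof (induction t rule: less_induct)
    case (less t)
    show ?case
    proof (cases "t \<le> P + k")
      case True
      then show ?thesis using B0 nn[of t] by simp
    next
      case False
      obtain a where a: "t - k \<le> a" "a < t - k + k" "act a" using win[of "t - k"] by blast
      have at: "a < t" using a False by linarith
      have "Dl (Suc a) \<le> Dl t" using monoD[OF mD, of "Suc a" t] at by simp
      moreover have "B (t - (P + k)) \<le> Dl (Suc a)"
      proof (cases "Il a - Dl a \<le> wv")
        case True
        hence "Dl (Suc a) = Il a" using DS[of a] a by simp
        moreover have "B (t - (P + k)) \<le> B (a - P)" using monoD[OF Bm] a by simp
        ultimately show ?thesis using IB[of a] by simp
      next
        case c: False
        hence "Dl (Suc a) = Dl a + wv" using DS[of a] a by simp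
        moreover have "B (a - (P + k)) \<le> Dl a" using less at by blast
        moreover have "B (t - (P + k) - k) \<le> B (a - (P + k))" using monoD[OF Bm] a by simp
        moreover have "B (t - (P + k)) \<le> B (t - (P + k) - k) + wv" by (rule Bk)
        ultimately show ?thesis by simp
      qed
      ultimately show ?thesis by simp
    qed
  qed
  show ?thesis using mD main by blast
qed

lemma q_eq: "queues route lam T w mu t i j =
   (\<Sum>u<t. inflow route lam T w mu (queues route lam T w mu u) u i j) -
   (\<Sum>u<t. serve route w mu (queues route lam T w mu u) u i j)"
  by (induction t arbitrary: i j) (simp_all add: Let_def)

lemma supp_one:
  assumes cyc: "cyclic_policy mu K"
    and ne: "route i \<noteq> []"
    and lam: "0 < lam i"
    and fin: "\<forall>e\<in>set (route i). max_inter_sched mu K e \<noteq> \<infinity>"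
    and wq: "\<forall>e\<in>set (route i). w i e = lam i * real (the_enat (max_inter_sched mu K e))"
    and tau: "(\<Sum>m<length (route i). the_enat (max_inter_sched mu K (route i ! m))) \<le> tau i"
  shows "arrived lam T i t \<le> delivered route lam T w mu i (t + tau i)"
proof -
  define Q where "Q = queues route lam T w mu"
  define r where "r = route i"
  define n where "n = length r"
  define Dl where "Dl j t = (\<Sum>u<t. serve route w mu (Q u) u i j)" for j t
  define Il where "Il j t = (\<Sum>u<t. inflow route lam T w mu (Q u) u i j)" for j t
  define Al where "Al t = (\<Sum>u<t. if u \<le> T then lam i else 0)" for t
  define kk where "kk m = the_enat (max_inter_sched mu K (r ! m))" for m
  define P where "P j = (\<Sum>m\<le>j. kk m)" for j
  have n0: "0 < n" using ne unfolding n_def r_def by simp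
  have mis: "max_inter_sched mu K (r ! m) = enat (kk m)" if "m < n" for m
  proof -
    have "r ! m \<in> set (route i)" using that unfolding n_def r_def by simp
    then obtain z where "max_inter_sched mu K (r ! m) = enat z" using fin by auto
    thus ?thesis unfolding kk_def by simp
  qed
  have wm: "w i (r ! m) = lam i * real (kk m)" if "m < n" for m
    using wq that unfolding kk_def n_def r_def by auto
  have win: "\<exists>a. s \<le> a \<and> a < s + kk m \<and> r ! m \<in> mu a" if "m < n" for m s
    using window[OF cyc mis[OF that]] .
  have DS: "Dl j (Suc t) = Dl j t + (if r ! j \<in> mu t then min (Il j t - Dl j t) (w i (r ! j)) else 0)"
    if "j < n" for j t
    using that q_eq[of route lam T w mu t i j] unfolding Dl_def Il_def Q_def r_def n_def
    by (simp add: serve_def)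
  have Il0: "Il 0 t = Al t" for t unfolding Il_def Al_def by (simp add: inflow_def)
  have IlS: "Il (Suc j) t = Dl j t" if "Suc j < n" for j t
    using that unfolding Il_def Dl_def n_def r_def by (simp add: inflow_def)
  have Alc: "Al t = lam i * real (min t (Suc T))" for t
  proof (induction t)
    case 0 then show ?case unfolding Al_def by simp
  next
    case (Suc t)
    have "Al (Suc t) = Al t + (if t \<le> T then lam i else 0)" unfolding Al_def by simp
    moreover have "\<not> t \<le> T \<Longrightarrow> min (Suc t) (Suc T) = min t (Suc T)" by simp
    moreover have "t \<le> T \<Longrightarrow> min (Suc t) (Suc T) = Suc (min t (Suc T))" by simp
    ultimately show ?case using Suc by (cases "t \<le> T") (simp_all add: algebra_simps)
  qed
  have Alm: "mono Al" unfolding mono_def Alc using lam by (auto intro: mult_left_mono)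
  have Alk: "Al x \<le> Al (x - k) + lam i * real k" for x k
  proof -
    have "min x (Suc T) \<le> min (x - k) (Suc T) + k" by linarith
    hence "real (min x (Suc T)) \<le> real (min (x - k) (Suc T)) + real k" by linarith
    hence "lam i * real (min x (Suc T)) \<le> lam i * (real (min (x - k) (Suc T)) + real k)"
      using lam by (intro mult_left_mono) auto
    thus ?thesis unfolding Alc by (simp add: algebra_simps)
  qed
  have chain: "mono (Dl j) \<and> (\<forall>t. Al (t - P j) \<le> Dl j t)" if "j < n" for j
    using that
  proof (induction j)
    case 0
    have "mono (Dl 0) \<and> (\<forall>t. Al (t - (0 + kk 0)) \<le> Dl 0 t)"
    proof (rule Lgen[where Il = "Il 0" and act = "\<lambda>t. r ! 0 \<in> mu t" and wv = "w i (r ! 0)"])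
      show "Dl 0 0 = 0" by (simp add: Dl_def)
      show "Dl 0 (Suc t) = Dl 0 t + (if r ! 0 \<in> mu t then min (Il 0 t - Dl 0 t) (w i (r ! 0)) else 0)" for t
        using DS 0 by blast
      show "0 \<le> w i (r ! 0)" using wm 0 lam by simp
      show "mono (Il 0)" using Alm unfolding Il0[abs_def] by simp
      show "0 \<le> Il 0 0" by (simp add: Il_def)
      show "\<exists>a. s \<le> a \<and> a < s + kk 0 \<and> r ! 0 \<in> mu a" for s using win 0 by blast
      show "Al (t - 0) \<le> Il 0 t" for t by (simp add: Il0)
      show "Al x \<le> Al (x - kk 0) + w i (r ! 0)" for x using Alk wm 0 by simp
      show "Al 0 \<le> 0" by (simp add: Al_def)
      show "mono Al" by (rule Alm)
    qed
    then show ?case unfolding P_def by simp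
  next
    case (Suc j)
    have IH: "mono (Dl j) \<and> (\<forall>t. Al (t - P j) \<le> Dl j t)" using Suc by simp
    have "mono (Dl (Suc j)) \<and> (\<forall>t. Al (t - (P j + kk (Suc j))) \<le> Dl (Suc j) t)"
    proof (rule Lgen[where Il = "Il (Suc j)" and act = "\<lambda>t. r ! Suc j \<in> mu t" and wv = "w i (r ! Suc j)"])
      show "Dl (Suc j) 0 = 0" by (simp add: Dl_def)
      show "Dl (Suc j) (Suc t) = Dl (Suc j) t + (if r ! Suc j \<in> mu t then min (Il (Suc j) t - Dl (Suc j) t) (w i (r ! Suc j)) else 0)" for t
        using DS Suc by blast
      show "0 \<le> w i (r ! Suc j)" using wm Suc lam by simp
      show "mono (Il (Suc j))" using IH unfolding IlS[OF Suc.prems, abs_def] by simp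
      show "0 \<le> Il (Suc j) 0" by (simp add: Il_def)
      show "\<exists>a. s \<le> a \<and> a < s + kk (Suc j) \<and> r ! Suc j \<in> mu a" for s using win Suc by blast
      show "Al (t - P j) \<le> Il (Suc j) t" for t using IH IlS[OF Suc.prems] by simp
      show "Al x \<le> Al (x - kk (Suc j)) + w i (r ! Suc j)" for x using Alk wm Suc by simp
      show "Al 0 \<le> 0" by (simp add: Al_def)
      show "mono Al" by (rule Alm)
    qed
    then show ?case unfolding P_def by simp
  qed
  have "P (n - 1) = (\<Sum>m<n. kk m)" unfolding P_def using n0
    by (metis Suc_pred' lessThan_Suc_atMost)
  hence Pt: "P (n - 1) \<le> tau i" using tau unfolding kk_def n_def r_def by simp
  have "arrived lam T i t = Al (Suc t)" unfolding arrived_def Al_def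
    by (simp add: lessThan_Suc_atMost)
  also have "\<dots> \<le> Al (Suc (t + tau i) - P (n - 1))" using Pt by (intro monoD[OF Alm]) linarith
  also have "\<dots> \<le> Dl (n - 1) (Suc (t + tau i))" using chain[of "n - 1"] n0 by simp
  also have "\<dots> = delivered route lam T w mu i (t + tau i)"
    unfolding delivered_def Dl_def Q_def n_def r_def by (simp add: lessThan_Suc_atMost)
  finally show ?thesis .
qed

lemma enat_sum: "finite A \<Longrightarrow> \<forall>e\<in>A. f e \<noteq> \<infinity> \<Longrightarrow> (\<Sum>e\<in>A. f e) = enat (\<Sum>e\<in>A. the_enat (f e))"
  by (induction A rule: finite_induct) (auto simp: zero_enat_def)

lemma enat_mem_le: "finite A \<Longrightarrow> e \<in> A \<Longrightarrow> (f e :: enat) \<le> (\<Sum>e\<in>A. f e)"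
  by (metis member_le_sum zero_le)

lemma distinct_sum_nth: "distinct r \<Longrightarrow> (\<Sum>e\<in>set r. g e) = (\<Sum>m<length r. g (r ! m))"
  by (simp add: sum_list_distinct_conv_sum_set[symmetric] sum_list_sum_nth atLeast0LessThan)

theorem corollary5:
  fixes E :: "('v \<times> 'v) set"
    and c :: "('v \<times> 'v) \<Rightarrow> real"
    and cf :: "('v \<times> 'v) \<Rightarrow> ('v \<times> 'v) \<Rightarrow> bool"
    and F :: "'f set"
    and route :: "'f \<Rightarrow> ('v \<times> 'v) list"
    and lam :: "'f \<Rightarrow> real"
    and tau :: "'f \<Rightarrow> nat"
    and w :: "'f \<Rightarrow> ('v \<times> 'v) \<Rightarrow> real"
    and mu :: "nat \<Rightarrow> ('v \<times> 'v) set"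
    and K :: nat
  assumes "finite E"
    and "conflict_graph E cf"
    and "finite F"
    and "\<forall>i\<in>F. valid_route E (route i)"
    and "\<forall>i\<in>F. lam i > 0"
    and "cyclic_policy mu K"
    and "\<forall>i\<in>F. (\<Sum>e\<in>set (route i). max_inter_sched mu K e) \<le> enat (tau i)"
    and "\<forall>e\<in>E. (\<Sum>i\<in>{i\<in>F. e \<in> set (route i)}. w i e) \<le> c e"
    and "\<forall>i\<in>F. \<forall>e\<in>set (route i). w i e = lam i * real (the_enat (max_inter_sched mu K e))"
    and "\<forall>t<K. mu t \<in> indep_sets E cf"
  shows "supports F route lam tau w mu \<and>
         (regular_schedule E mu K \<longrightarrow>
            (\<forall>i\<in>F. \<forall>e\<in>set (route i). w i e = lam i / mean_act mu K e))"
proof -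
  have fin: "\<forall>e\<in>set (route i). max_inter_sched mu K e \<noteq> \<infinity>" if "i \<in> F" for i
  proof
    fix e assume e: "e \<in> set (route i)"
    have "max_inter_sched mu K e \<le> (\<Sum>e\<in>set (route i). max_inter_sched mu K e)"
      by (rule enat_mem_le) (use e in auto)
    also have "\<dots> \<le> enat (tau i)" using assms(7) that by blast
    finally show "max_inter_sched mu K e \<noteq> \<infinity>" by (cases "max_inter_sched mu K e") auto
  qed
  have part1: "supports F route lam tau w mu"
    unfolding supports_def
  proof (intro allI ballI)
    fix T i t assume i: "i \<in> F"
    have vr: "route i \<noteq> []" "distinct (route i)" using assms(4) i unfolding valid_route_def by auto
    have "enat (\<Sum>e\<in>set (route i). the_enat (max_inter_sched mu K e)) \<le> enat (tau i)"
      using assms(7) i enat_sum[of "set (route i)" "max_inter_sched mu K"] fin[OF i] by (metis List.finite_set)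
    hence "(\<Sum>e\<in>set (route i). the_enat (max_inter_sched mu K e)) \<le> tau i" by simp
    hence tau: "(\<Sum>m<length (route i). the_enat (max_inter_sched mu K (route i ! m))) \<le> tau i"
      using distinct_sum_nth[OF vr(2), of "\<lambda>e. the_enat (max_inter_sched mu K e)"] by simp
    show "arrived lam T i t \<le> delivered route lam T w mu i (t + tau i)"
      by (rule supp_one[where route = route and i = i and lam = lam and tau = tau, OF assms(6) vr(1) _ fin[OF i] _ tau]) (use assms(5,9) i in auto)
  qed
  have part2: "\<forall>i\<in>F. \<forall>e\<in>set (route i). w i e = lam i / mean_act mu K e"
    if reg: "regular_schedule E mu K"
  proof (intro ballI)
    fix i e assume i: "i \<in> F" and e: "e \<in> set (route i)"
    have eE: "e \<in> E" using assms(4) i e unfolding valid_route_def by auto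
    obtain z where z: "max_inter_sched mu K e = enat z" using fin[OF i] e by auto
    have "real z = 1 / mean_act mu K e" using reg eE z unfolding regular_schedule_def by force
    thus "w i e = lam i / mean_act mu K e" using assms(9) i e z by simp
  qed
  show ?thesis using part1 part2 by blast
qed

end
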